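(* Let $f\colon\mathbb{R}^m\to\mathbb{R}$ be as in the context, let $p\in\mathbb{R}^m$, and let $L\le m$ be a positive integer. Let $q_1,\dots,q_D$ be the pairwise distinct elements of $\{-\frac{2\pi}{3},0,\frac{2\pi}{3}\}^m$ having at most $L$ non-zero entries (all such elements, each listed once). Define $\tilde f\colon\mathbb{R}^m\to\mathbb{R}$ by $$\tilde f(\theta)=\sum_{j=1}^D f(p+q_j)\,\tilde K(q_j,\theta-p)\quad\text{for all }\theta\in\mathbb{R}^m.$$ Then: (i) $D=\sum_{k=0}^L 2^k\binom{m}{k}$, i.e. obtaining $\tilde f$ requires evaluating $f$ at $D=\sum_{k=0}^L2^k\binom mk$ points; (ii) if $\vartheta\in\mathbb{R}^m$ has at most $L$ non-zero entries, then $\tilde f(p+\vartheta)=f(p+\vartheta)$; (iii) $D^\alpha(f-\tilde f)(p)=0$ for all multi-indices $\alpha\in(\mathbb{Z}_{\ge0})^m$ with $|\alpha|\le L$.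
   Context: The function $f\colon\mathbb{R}^m\to\mathbb{R}$ is $f(\theta)=\langle\psi(\theta)|\mathcal{M}|\psi(\theta)\rangle$, where $\mathcal{M}\in\mathbb{C}^{2^n\times2^n}$ is Hermitian and $|\psi(\theta)\rangle=C_{m+1}R_m(\theta_m)C_m\cdots R_1(\theta_1)C_1|0\rangle^{\otimes n}$ with $C_1,\dots,C_{m+1}$ arbitrary $n$-qubit unitaries and $R_j(\theta_j)=\exp(-i\frac{\theta_j}{2}G_j)$, where each $G_j\in\mathbb{C}^{2^n\times2^n}$ is Hermitian with set of eigenvalues $\{-1,1\}$. It is known that such $f$ is of the form $f(z)=\sum_{\omega\in\{-1,0,1\}^m}c_\omega e^{i\omega^\intercal z}$ with $\overline{c_{-\omega}}=c_\omega$. $\tilde K(x,z)=\prod_{j=1}^m\frac{1+2\cos(x_j-z_j)}{3}$ for $x,z\in\mathbb{R}^m$. $D^\alpha$ denotes the partial derivative of multi-index $\alpha$, $|\alpha|=\sum_i\alpha_i$. *)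

theory Defs
  imports "HOL-Analysis.Analysis" "Jordan_Normal_Form.Char_Poly"
begin

definition adj :: "complex mat \<Rightarrow> complex mat" where
  "adj A = mat (dim_col A) (dim_row A) (\<lambda>(i,j). cnj (A $$ (j,i)))"

definition hermitian_mat :: "nat \<Rightarrow> complex mat \<Rightarrow> bool" where
  "hermitian_mat N A \<longleftrightarrow> A \<in> carrier_mat N N \<and> adj A = A"

definition unitary_mat :: "nat \<Rightarrow> complex mat \<Rightarrow> bool" where
  "unitary_mat N U \<longleftrightarrow> U \<in> carrier_mat N N \<and> adj U * U = 1\<^sub>m N \<and> U * adj U = 1\<^sub>m N"

definition mat_exp :: "complex mat \<Rightarrow> complex mat" where
  "mat_exp A = mat (dim_row A) (dim_col A)
     (\<lambda>(i,j). (\<Sum>k. (A ^\<^sub>m k) $$ (i,j) / of_nat (fact k)))"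

definition rot :: "complex mat \<Rightarrow> real \<Rightarrow> complex mat" where
  "rot G t = mat_exp ((- \<i> * complex_of_real (t / 2)) \<cdot>\<^sub>m G)"

(* |0>^{\<otimes> n} *)
definition ket0 :: "nat \<Rightarrow> complex vec" where
  "ket0 n = unit_vec (2 ^ n) 0"

(* circuit_state n C G k \<theta> = C_{k+1} R_k(\<theta>_k) C_k ... R_1(\<theta>_1) C_1 |0>;
   parameters \<theta>_1..\<theta>_m are the values \<theta> 1, ..., \<theta> m *)
fun circuit_state :: "nat \<Rightarrow> (nat \<Rightarrow> complex mat) \<Rightarrow> (nat \<Rightarrow> complex mat) \<Rightarrow> nat
    \<Rightarrow> (nat \<Rightarrow> real) \<Rightarrow> complex vec" where
  "circuit_state n C G 0 \<theta> = C 1 *\<^sub>v ket0 n"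
| "circuit_state n C G (Suc k) \<theta> =
     C (k + 2) *\<^sub>v (rot (G (k + 1)) (\<theta> (k + 1)) *\<^sub>v circuit_state n C G k \<theta>)"

(* f(\<theta>) = <\<psi>(\<theta>)| M |\<psi>(\<theta>)>  (a real number for Hermitian M; we take Re) *)
definition qfun :: "nat \<Rightarrow> nat \<Rightarrow> (nat \<Rightarrow> complex mat) \<Rightarrow> (nat \<Rightarrow> complex mat)
    \<Rightarrow> complex mat \<Rightarrow> (nat \<Rightarrow> real) \<Rightarrow> real" where
  "qfun n m C G M \<theta> =
     (let \<psi> = circuit_state n C G m \<theta>
      in Re (\<Sum>i<2 ^ n. cnj (\<psi> $ i) * ((M *\<^sub>v \<psi>) $ i)))"

definition Ktilde :: "nat \<Rightarrow> (nat \<Rightarrow> real) \<Rightarrow> (nat \<Rightarrow> real) \<Rightarrow> real" where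
  "Ktilde m x z = (\<Prod>j\<in>{1..m}. (1 + 2 * cos (x j - z j)) / 3)"

definition qgrid :: "nat \<Rightarrow> nat \<Rightarrow> (nat \<Rightarrow> real) set" where
  "qgrid m L = {q. (\<forall>j\<in>{1..m}. q j \<in> {- 2 * pi / 3, 0, 2 * pi / 3}) \<and>
                  (\<forall>j. j \<notin> {1..m} \<longrightarrow> q j = 0) \<and>
                  card {j\<in>{1..m}. q j \<noteq> 0} \<le> L}"

definition ftilde :: "((nat \<Rightarrow> real) \<Rightarrow> real) \<Rightarrow> nat \<Rightarrow> nat \<Rightarrow> (nat \<Rightarrow> real)
    \<Rightarrow> (nat \<Rightarrow> real) \<Rightarrow> real" where
  "ftilde f m L p \<theta> = (\<Sum>q\<in>qgrid m L. f (\<lambda>j. p j + q j) * Ktilde m q (\<lambda>j. \<theta> j - p j))"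

definition partial :: "nat \<Rightarrow> ((nat \<Rightarrow> real) \<Rightarrow> real) \<Rightarrow> (nat \<Rightarrow> real) \<Rightarrow> real" where
  "partial j g x = deriv (\<lambda>t. g (x(j := t))) (x j)"

definition Dmulti :: "nat \<Rightarrow> (nat \<Rightarrow> nat) \<Rightarrow> ((nat \<Rightarrow> real) \<Rightarrow> real) \<Rightarrow> (nat \<Rightarrow> real) \<Rightarrow> real" where
  "Dmulti m \<alpha> g = foldr (\<lambda>j h. (partial j ^^ \<alpha> j) h) [1..<m+1] g"

end

theory Submission
  imports Defs "Jordan_Normal_Form.Jordan_Normal_Form_Uniqueness" "Jordan_Normal_Form.Jordan_Normal_Form_Existence"
begin

no_notation vec_nth (infixl \<open>$\<close> 90)


definition Q3 :: "real set" where "Q3 = {- 2 * pi / 3, 0, 2 * pi / 3}"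
definition k1 :: "real \<Rightarrow> real" where "k1 u = (1 + 2 * cos u) / 3"

lemma sin_120': "sin (2 * pi / 3) = sqrt 3 / 2"
proof -
  have "sin (2 * pi / 3) = sin (pi - pi / 3)" by simp
  also have "\<dots> = sin (pi / 3)" by (rule sin_pi_minus)
  finally show ?thesis by (simp add: sin_60)
qed

lemma poly_id:
  fixes a b d X Y U V r :: real
  assumes r: "r * r = 3"
  shows "(a + b * X + d * Y) * ((1 + 2 * U) / 3)
     + (a + b * (- X / 2 - r / 2 * Y) + d * (- Y / 2 + r / 2 * X)) * ((1 + 2 * (- U / 2 + r / 2 * V)) / 3)
     + (a + b * (- X / 2 + r / 2 * Y) + d * (- Y / 2 - r / 2 * X)) * ((1 + 2 * (- U / 2 - r / 2 * V)) / 3)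
     = a + b * (X * U - Y * V) + d * (Y * U + X * V)"
proof -
  have "(a + b * X + d * Y) * ((1 + 2 * U) / 3)
     + (a + b * (- X / 2 - r / 2 * Y) + d * (- Y / 2 + r / 2 * X)) * ((1 + 2 * (- U / 2 + r / 2 * V)) / 3)
     + (a + b * (- X / 2 + r / 2 * Y) + d * (- Y / 2 - r / 2 * X)) * ((1 + 2 * (- U / 2 - r / 2 * V)) / 3)
     = a + b * X * U + d * Y * U + (r * r) * (- b * Y * V + d * X * V) / 3"
    by (simp add: algebra_simps add_divide_distrib diff_divide_distrib)
  also have "\<dots> = a + b * (X * U - Y * V) + d * (Y * U + X * V)" by (simp only: r) (simp add: field_simps)
  finally show ?thesis .
qed

lemma trig_interp:
  fixes a b d p u :: real
  shows "(\<Sum>s\<in>Q3. (a + b * cos (p + s) + d * sin (p + s)) * k1 (s - u))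
         = a + b * cos (p + u) + d * sin (p + u)"
proof -
  let ?c = "2 * pi / 3"
  have Q: "Q3 = {0, ?c, - ?c}" unfolding Q3_def by auto
  have ne: "(0::real) \<noteq> ?c" "(0::real) \<noteq> - ?c" "?c \<noteq> - ?c" by auto
  have c: "cos ?c = - 1/2" "sin ?c = sqrt 3 / 2" by (simp_all add: cos_120 sin_120')
  have e1: "cos (p + ?c) = - cos p / 2 - sqrt 3 / 2 * sin p" "sin (p + ?c) = - sin p / 2 + sqrt 3 / 2 * cos p"
       "cos (?c - u) = - cos u / 2 + sqrt 3 / 2 * sin u"
    by (simp_all only: cos_add sin_add cos_diff c) (simp_all add: algebra_simps)
  have e2: "cos (p + - ?c) = - cos p / 2 + sqrt 3 / 2 * sin p" "sin (p + - ?c) = - sin p / 2 - sqrt 3 / 2 * cos p"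
       "cos (- ?c - u) = - cos u / 2 - sqrt 3 / 2 * sin u"
    by (simp_all only: cos_add sin_add cos_diff cos_minus sin_minus c) (simp_all add: algebra_simps)
  have s: "(\<Sum>s\<in>Q3. (a + b * cos (p + s) + d * sin (p + s)) * k1 (s - u))
     = (a + b * cos p + d * sin p) * ((1 + 2 * cos u) / 3)
     + (a + b * cos (p + ?c) + d * sin (p + ?c)) * ((1 + 2 * cos (?c - u)) / 3)
     + (a + b * cos (p + - ?c) + d * sin (p + - ?c)) * ((1 + 2 * cos (- ?c - u)) / 3)"
    unfolding Q k1_def using ne by (simp add: add.assoc)
  show ?thesis unfolding s e1 e2 cos_add[of p u] sin_add[of p u]
    by (rule poly_id[where r="sqrt 3"]) simp
qed


definition gridV :: "nat set \<Rightarrow> real set \<Rightarrow> (nat \<Rightarrow> real) set" where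
  "gridV T V = {q. (\<forall>i\<in>T. q i \<in> V) \<and> (\<forall>i. i \<notin> T \<longrightarrow> q i = 0)}"

lemma gridV_empty: "gridV {} V = {\<lambda>_. 0}"
  unfolding gridV_def by auto

lemma gridV_insert:
  assumes "j \<notin> T"
  shows "gridV (insert j T) V = (\<lambda>(q,s). q(j:=s)) ` (gridV T V \<times> V)"
proof
  show "gridV (insert j T) V \<subseteq> (\<lambda>(q,s). q(j:=s)) ` (gridV T V \<times> V)"
  proof
    fix q assume q: "q \<in> gridV (insert j T) V"
    have "q = (\<lambda>(q,s). q(j:=s)) (q(j:=0), q j)" by simp
    moreover have "(q(j:=0), q j) \<in> gridV T V \<times> V" using q assms unfolding gridV_def by auto
    ultimately show "q \<in> (\<lambda>(q,s). q(j:=s)) ` (gridV T V \<times> V)" by blast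
  qed
next
  show "(\<lambda>(q,s). q(j:=s)) ` (gridV T V \<times> V) \<subseteq> gridV (insert j T) V"
    using assms unfolding gridV_def by auto
qed

lemma gridV_inj:
  assumes "j \<notin> T"
  shows "inj_on (\<lambda>(q,s). q(j:=s)) (gridV T V \<times> V)"
proof (rule inj_onI, clarify)
  fix q s q' s' assume q: "q \<in> gridV T V" and q': "q' \<in> gridV T V" and e: "q(j := s) = q'(j := s')"
  have "q j = 0" "q' j = 0" using q q' assms unfolding gridV_def by auto
  from e have "s = s'" by (metis fun_upd_same)
  moreover from e have "q = q'"
    by (metis \<open>q j = 0\<close> \<open>q' j = 0\<close> fun_upd_triv fun_upd_upd)
  ultimately show "q = q' \<and> s = s'" by simp
qed

lemma finite_gridV: "finite T \<Longrightarrow> finite V \<Longrightarrow> finite (gridV T V)"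
proof (induction T rule: finite_induct)
  case empty then show ?case by (simp add: gridV_empty)
next
  case (insert x F) then show ?case by (simp add: gridV_insert)
qed

lemma card_gridV: "finite T \<Longrightarrow> finite V \<Longrightarrow> card (gridV T V) = card V ^ card T"
proof (induction T rule: finite_induct)
  case empty then show ?case by (simp add: gridV_empty)
next
  case (insert x F)
  have "card (gridV (insert x F) V) = card (gridV F V \<times> V)"
    unfolding gridV_insert[OF insert(2)] by (rule card_image[OF gridV_inj[OF insert(2)]])
  also have "\<dots> = card V ^ card F * card V" using insert by (simp add: card_cartesian_product)
  finally show ?case using insert by simp
qed

definition upd :: "nat set \<Rightarrow> (nat \<Rightarrow> real) \<Rightarrow> (nat \<Rightarrow> real) \<Rightarrow> (nat \<Rightarrow> real) \<Rightarrow> (nat \<Rightarrow> real)" where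
  "upd S p w q = (\<lambda>i. if i \<in> S then p i + q i else w i)"

lemma interp1:
  assumes "\<forall>t. h (w(j:=t)) = a + b * cos t + d * sin t"
  shows "h w = (\<Sum>s\<in>Q3. h (w(j := p j + s)) * k1 (s - (w j - p j)))"
proof -
  have "h w = a + b * cos (p j + (w j - p j)) + d * sin (p j + (w j - p j))"
    using assms[rule_format, of "w j"] by simp
  also have "\<dots> = (\<Sum>s\<in>Q3. (a + b * cos (p j + s) + d * sin (p j + s)) * k1 (s - (w j - p j)))"
    by (rule trig_interp[symmetric])
  also have "\<dots> = (\<Sum>s\<in>Q3. h (w(j := p j + s)) * k1 (s - (w j - p j)))"
    using assms by simp
  finally show ?thesis .
qed

lemma interp_multi:
  assumes "finite S"
    and T: "\<forall>j\<in>S. \<forall>w. \<exists>a b d. \<forall>t. h (w(j:=t)) = a + b * cos t + d * sin t"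
  shows "h w = (\<Sum>q\<in>gridV S Q3. h (upd S p w q) * (\<Prod>i\<in>S. k1 (q i - (w i - p i))))"
  using assms
proof (induction S arbitrary: w rule: finite_induct)
  case empty
  then show ?case by (simp add: gridV_empty upd_def)
next
  case (insert x F w)
  have IH: "h w = (\<Sum>q\<in>gridV F Q3. h (upd F p w q) * (\<Prod>i\<in>F. k1 (q i - (w i - p i))))"
    using insert.IH[of w] insert.prems by simp
  have fQ: "finite Q3" unfolding Q3_def by simp
  have step: "h (upd F p w q) = (\<Sum>s\<in>Q3. h (upd (insert x F) p w (q(x:=s))) * k1 (s - (w x - p x)))"
    for q
  proof -
    have "\<exists>a b d. \<forall>t. h ((upd F p w q)(x:=t)) = a + b * cos t + d * sin t"
      using spec[OF bspec[OF insert.prems insertI1], of "upd F p w q"] .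
    then obtain a b d where abd: "\<forall>t. h ((upd F p w q)(x:=t)) = a + b * cos t + d * sin t"
      by blast
    have ux: "upd F p w q x = w x" using insert(2) unfolding upd_def by simp
    have "h (upd F p w q) = (\<Sum>s\<in>Q3. h ((upd F p w q)(x := p x + s)) * k1 (s - (upd F p w q x - p x)))"
      by (rule interp1[OF abd])
    also have "\<dots> = (\<Sum>s\<in>Q3. h (upd (insert x F) p w (q(x:=s))) * k1 (s - (w x - p x)))"
      unfolding ux
    proof (rule sum.cong[OF refl])
      fix s
      have "(upd F p w q)(x := p x + s) = upd (insert x F) p w (q(x:=s))"
        using insert(2) unfolding upd_def by (auto simp: fun_eq_iff)
      then show "h ((upd F p w q)(x := p x + s)) * k1 (s - (w x - p x)) =
                 h (upd (insert x F) p w (q(x:=s))) * k1 (s - (w x - p x))" by simp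
    qed
    finally show ?thesis .
  qed
  have pr: "(\<Prod>i\<in>insert x F. k1 ((q(x:=s)) i - (w i - p i))) =
            k1 (s - (w x - p x)) * (\<Prod>i\<in>F. k1 (q i - (w i - p i)))" for q s
  proof -
    have "(\<Prod>i\<in>F. k1 ((q(x:=s)) i - (w i - p i))) = (\<Prod>i\<in>F. k1 (q i - (w i - p i)))"
      using insert(2) by (intro prod.cong) auto
    then show ?thesis using insert(1,2) by simp
  qed
  have "h w = (\<Sum>q\<in>gridV F Q3. \<Sum>s\<in>Q3. h (upd (insert x F) p w (q(x:=s))) * k1 (s - (w x - p x))
                 * (\<Prod>i\<in>F. k1 (q i - (w i - p i))))"
    by (simp only: IH step sum_distrib_right mult.assoc)
  also have "\<dots> = (\<Sum>(q,s)\<in>gridV F Q3 \<times> Q3. h (upd (insert x F) p w (q(x:=s)))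
                 * (\<Prod>i\<in>insert x F. k1 ((q(x:=s)) i - (w i - p i))))"
    by (simp only: pr sum.cartesian_product split_def fst_conv snd_conv mult.assoc mult.left_commute)
  also have "\<dots> = (\<Sum>q\<in>gridV (insert x F) Q3. h (upd (insert x F) p w q) * (\<Prod>i\<in>insert x F. k1 (q i - (w i - p i))))"
    unfolding gridV_insert[OF insert(2)]
    by (subst sum.reindex[OF gridV_inj[OF insert(2)]]) (simp only: comp_def split_def)
  finally show ?case .
qed


lemma k1_zero: "k1 0 = 1" unfolding k1_def by simp
lemma k1_c: "k1 (2 * pi / 3) = 0" "k1 (- 2 * pi / 3) = 0"
proof -
  show "k1 (2 * pi / 3) = 0" unfolding k1_def by (simp add: cos_120)
  have "cos (- 2 * pi / 3) = cos (2 * pi / 3)" by (metis cos_minus minus_divide_left mult_minus_left)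
  then show "k1 (- 2 * pi / 3) = 0" unfolding k1_def by (simp add: cos_120)
qed

lemma Ktilde_k1: "Ktilde m x z = (\<Prod>j\<in>{1..m}. k1 (x j - z j))"
  unfolding Ktilde_def k1_def ..

lemma qgrid_eq: "qgrid m L = {q \<in> gridV {1..m} Q3. card {j\<in>{1..m}. q j \<noteq> 0} \<le> L}"
  unfolding qgrid_def gridV_def Q3_def by auto

lemma finite_Q3: "finite Q3" unfolding Q3_def by simp

lemma finite_qgrid: "finite (qgrid m L)"
  unfolding qgrid_eq using finite_gridV[OF _ finite_Q3, of "{1..m}"] by simp

lemma part2_abstract:
  fixes f :: "(nat \<Rightarrow> real) \<Rightarrow> real"
  assumes T: "\<forall>j\<in>{1..m}. \<forall>w. \<exists>a b d. \<forall>t. f (w(j:=t)) = a + b * cos t + d * sin t"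
    and cong: "\<And>\<theta> \<theta>'. (\<forall>i\<in>{1..m}. \<theta> i = \<theta>' i) \<Longrightarrow> f \<theta> = f \<theta>'"
    and v: "card {j\<in>{1..m}. v j \<noteq> 0} \<le> L"
  shows "ftilde f m L p (\<lambda>j. p j + v j) = f (\<lambda>j. p j + v j)"
proof -
  define S where "S = {j\<in>{1..m}. v j \<noteq> 0}"
  have S1: "S \<subseteq> {1..m}" and fS: "finite S" unfolding S_def by auto
  have sub: "gridV S Q3 \<subseteq> qgrid m L"
  proof
    fix q assume q: "q \<in> gridV S Q3"
    have "{j\<in>{1..m}. q j \<noteq> 0} \<subseteq> S" using q unfolding gridV_def by auto
    then have "card {j\<in>{1..m}. q j \<noteq> 0} \<le> card S" using fS by (rule card_mono[rotated])
    moreover have "q \<in> gridV {1..m} Q3" using q S1 unfolding gridV_def Q3_def by auto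
    ultimately show "q \<in> qgrid m L" unfolding qgrid_eq using v S_def by auto
  qed
  have zero: "f (\<lambda>j. p j + q j) * Ktilde m q (\<lambda>j. p j + v j - p j) = 0"
    if q: "q \<in> qgrid m L - gridV S Q3" for q
  proof -
    from q have qg: "q \<in> gridV {1..m} Q3" unfolding qgrid_eq by auto
    from q have "\<not> ((\<forall>i\<in>S. q i \<in> Q3) \<and> (\<forall>i. i \<notin> S \<longrightarrow> q i = 0))" unfolding gridV_def by auto
    moreover have "\<forall>i\<in>S. q i \<in> Q3" using qg S1 unfolding gridV_def by auto
    ultimately obtain i where i: "i \<notin> S" "q i \<noteq> 0" by auto
    then have i1: "i \<in> {1..m}" using qg unfolding gridV_def by auto
    then have vi: "v i = 0" using i unfolding S_def by auto
    have "q i \<in> Q3" using qg i1 unfolding gridV_def by auto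
    then have qi: "q i = 2 * pi / 3 \<or> q i = - 2 * pi / 3" using i(2) unfolding Q3_def by auto
    have "k1 (q i) = 0" using qi by (elim disjE) (simp_all only: k1_c)
    then have "k1 (q i - (p i + v i - p i)) = 0" using vi by simp
    then have "Ktilde m q (\<lambda>j. p j + v j - p j) = 0" unfolding Ktilde_k1
      using i1 by (intro prod_zero) auto
    then show ?thesis by simp
  qed
  have "ftilde f m L p (\<lambda>j. p j + v j) =
        (\<Sum>q\<in>gridV S Q3. f (\<lambda>j. p j + q j) * Ktilde m q (\<lambda>j. p j + v j - p j))"
    unfolding ftilde_def
    by (rule sum.mono_neutral_right[OF finite_qgrid sub]) (use zero in blast)
  also have "\<dots> = (\<Sum>q\<in>gridV S Q3. f (upd S p (\<lambda>j. p j + v j) q) *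
                       (\<Prod>i\<in>S. k1 (q i - ((p i + v i) - p i))))"
  proof (rule sum.cong[OF refl])
    fix q assume q: "q \<in> gridV S Q3"
    have "f (\<lambda>j. p j + q j) = f (upd S p (\<lambda>j. p j + v j) q)"
      by (rule cong) (use q in \<open>auto simp: upd_def gridV_def S_def\<close>)
    moreover have "Ktilde m q (\<lambda>j. p j + v j - p j) = (\<Prod>i\<in>S. k1 (q i - ((p i + v i) - p i)))"
      unfolding Ktilde_k1
      by (rule prod.mono_neutral_right[OF _ S1]) (use q in \<open>auto simp: gridV_def S_def k1_zero\<close>)
    ultimately show "f (\<lambda>j. p j + q j) * Ktilde m q (\<lambda>j. p j + v j - p j) =
         f (upd S p (\<lambda>j. p j + v j) q) * (\<Prod>i\<in>S. k1 (q i - ((p i + v i) - p i)))" by simp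
  qed
  also have "\<dots> = f (\<lambda>j. p j + v j)"
    by (rule interp_multi[symmetric, OF fS]) (use T S1 in blast)
  finally show ?thesis .
qed

lemma partial_vanish:
  assumes Z: "\<forall>x. (\<forall>i. i \<notin> S \<longrightarrow> x i = p i) \<longrightarrow> h x = 0" and j: "j \<in> S"
  shows "\<forall>x. (\<forall>i. i \<notin> S \<longrightarrow> x i = p i) \<longrightarrow> partial j h x = 0"
proof (intro allI impI)
  fix x assume x: "\<forall>i. i \<notin> S \<longrightarrow> x i = p i"
  have "(\<lambda>t. h (x(j := t))) = (\<lambda>t. 0)"
    using Z x j by (auto simp: fun_eq_iff)
  then show "partial j h x = 0" unfolding partial_def by (simp add: deriv_const)
qed

lemma funpow_partial_vanish:
  assumes Z: "\<forall>x. (\<forall>i. i \<notin> S \<longrightarrow> x i = p i) \<longrightarrow> h x = 0" and j: "k = 0 \<or> j \<in> S"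
  shows "\<forall>x. (\<forall>i. i \<notin> S \<longrightarrow> x i = p i) \<longrightarrow> (partial j ^^ k) h x = 0"
  using j
proof (induction k)
  case 0 then show ?case using Z by simp
next
  case (Suc k)
  then have jS: "j \<in> S" by simp
  have "\<forall>x. (\<forall>i. i \<notin> S \<longrightarrow> x i = p i) \<longrightarrow> (partial j ^^ k) h x = 0" using Suc jS by blast
  from partial_vanish[OF this jS] show ?case by simp
qed

lemma part3_abstract:
  assumes Z: "\<forall>x. (\<forall>i. i \<notin> S \<longrightarrow> x i = p i) \<longrightarrow> g x = 0"
    and Sa: "\<forall>j\<in>{1..m}. 0 < \<alpha> j \<longrightarrow> j \<in> S"
  shows "Dmulti m \<alpha> g p = 0"
proof -
  have G: "\<forall>x. (\<forall>i. i \<notin> S \<longrightarrow> x i = p i) \<longrightarrow> foldr (\<lambda>j h. (partial j ^^ \<alpha> j) h) js g x = 0"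
    if "set js \<subseteq> {1..m}" for js
    using that
  proof (induction js)
    case Nil then show ?case using Z by simp
  next
    case (Cons j js)
    then have IH: "\<forall>x. (\<forall>i. i \<notin> S \<longrightarrow> x i = p i) \<longrightarrow> foldr (\<lambda>j h. (partial j ^^ \<alpha> j) h) js g x = 0"
      and j: "j \<in> {1..m}" by auto
    have "\<alpha> j = 0 \<or> j \<in> S" using Sa j by auto
    from funpow_partial_vanish[OF IH this] show ?case by simp
  qed
  have A: "\<forall>x. (\<forall>i. i \<notin> S \<longrightarrow> x i = p i) \<longrightarrow> foldr (\<lambda>j h. (partial j ^^ \<alpha> j) h) [1..<m+1] g x = 0"
    by (rule G) auto
  show ?thesis unfolding Dmulti_def using A[rule_format, of p] by simp
qed

lemma part1_count:
  shows "card (qgrid m L) = (\<Sum>k\<le>L. 2 ^ k * (m choose k))"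
proof -
  define c :: real where "c = 2 * pi / 3"
  have c0: "c \<noteq> 0" unfolding c_def by simp
  define TT where "TT = {T. T \<subseteq> {1..m} \<and> card T \<le> L}"
  have fTT: "finite TT" unfolding TT_def by simp
  have eq: "qgrid m L = (\<Union>T\<in>TT. gridV T {-c, c})"
  proof
    show "qgrid m L \<subseteq> (\<Union>T\<in>TT. gridV T {-c, c})"
    proof
      fix q assume q: "q \<in> qgrid m L"
      let ?T = "{j\<in>{1..m}. q j \<noteq> 0}"
      have "?T \<in> TT" using q unfolding TT_def qgrid_def by auto
      moreover have "q \<in> gridV ?T {-c, c}" using q unfolding gridV_def qgrid_def c_def by auto
      ultimately show "q \<in> (\<Union>T\<in>TT. gridV T {-c, c})" by blast
    qed
  next
    show "(\<Union>T\<in>TT. gridV T {-c, c}) \<subseteq> qgrid m L"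
    proof
      fix q assume "q \<in> (\<Union>T\<in>TT. gridV T {-c, c})"
      then obtain T where T: "T \<in> TT" "q \<in> gridV T {-c, c}" by blast
      have "{j\<in>{1..m}. q j \<noteq> 0} = T" using T c0 unfolding TT_def gridV_def by auto
      then show "q \<in> qgrid m L" using T unfolding TT_def gridV_def qgrid_def c_def by auto
    qed
  qed
  have supp: "T = {i. q i \<noteq> 0}" if "q \<in> gridV T {-c, c}" for q T
    using that c0 unfolding gridV_def by auto
  have "card (qgrid m L) = (\<Sum>T\<in>TT. card (gridV T {-c, c}))"
    unfolding eq
  proof (rule card_UN_disjoint[OF fTT])
    show "\<forall>T\<in>TT. finite (gridV T {- c, c})" unfolding TT_def
      by (auto intro!: finite_gridV intro: finite_subset)
    show "\<forall>T\<in>TT. \<forall>T'\<in>TT. T \<noteq> T' \<longrightarrow> gridV T {- c, c} \<inter> gridV T' {- c, c} = {}"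
      using supp by blast
  qed
  also have "\<dots> = (\<Sum>T\<in>TT. 2 ^ card T)"
  proof (rule sum.cong[OF refl])
    fix T assume "T \<in> TT"
    then have "finite T" unfolding TT_def by (auto intro: finite_subset)
    moreover have "card {-c, c} = 2" using c0 by simp
    ultimately show "card (gridV T {- c, c}) = 2 ^ card T" by (simp add: card_gridV)
  qed
  also have "TT = (\<Union>k\<in>{..L}. {T. T \<subseteq> {1..m} \<and> card T = k})" unfolding TT_def by auto
  also have "(\<Sum>T\<in>(\<Union>k\<in>{..L}. {T. T \<subseteq> {1..m} \<and> card T = k}). 2 ^ card T) =
             (\<Sum>k\<le>L. \<Sum>T\<in>{T. T \<subseteq> {1..m} \<and> card T = k}. (2::nat) ^ card T)"
    by (rule sum.UNION_disjoint) auto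
  also have "\<dots> = (\<Sum>k\<le>L. 2 ^ k * (m choose k))"
  proof (rule sum.cong[OF refl])
    fix k
    have "(\<Sum>T\<in>{T. T \<subseteq> {1..m} \<and> card T = k}. (2::nat) ^ card T) =
          (\<Sum>T\<in>{T. T \<subseteq> {1..m} \<and> card T = k}. 2 ^ k)" by simp
    also have "\<dots> = 2 ^ k * (m choose k)" using n_subsets[of "{1..m}" k] by simp
    finally show "(\<Sum>T\<in>{T. T \<subseteq> {1..m} \<and> card T = k}. (2::nat) ^ card T) = 2 ^ k * (m choose k)" .
  qed
  finally show ?thesis .
qed


lemma smult_mat_vec: "A \<in> carrier_mat nr nc \<Longrightarrow> v \<in> carrier_vec nc \<Longrightarrow> (k \<cdot>\<^sub>m A) *\<^sub>v v = k \<cdot>\<^sub>v (A *\<^sub>v v)"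
proof (intro eq_vecI)
  fix i assume A: "A \<in> carrier_mat nr nc" and v: "v \<in> carrier_vec nc" and i: "i < dim_vec (k \<cdot>\<^sub>v (A *\<^sub>v v))"
  have "row A i \<in> carrier_vec nc" using A by auto
  then show "((k \<cdot>\<^sub>m A) *\<^sub>v v) $ i = (k \<cdot>\<^sub>v (A *\<^sub>v v)) $ i"
    using A v i smult_scalar_prod_distrib[OF \<open>row A i \<in> carrier_vec nc\<close> v] by simp
qed auto

lemma smult_smult_comm: "(a::complex) \<cdot>\<^sub>m (b \<cdot>\<^sub>m X) = b \<cdot>\<^sub>m (a \<cdot>\<^sub>m X)"
  by (intro eq_matI) auto

lemma pow_smult_invol:
  fixes G :: "complex mat"
  assumes G: "G \<in> carrier_mat N N" and GG: "G * G = 1\<^sub>m N"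
  shows "(c \<cdot>\<^sub>m G) ^\<^sub>m k = c ^ k \<cdot>\<^sub>m (if even k then 1\<^sub>m N else G)"
proof (induction k)
  case 0 then show ?case using G by (intro eq_matI) auto
next
  case (Suc k)
  have "(c \<cdot>\<^sub>m G) ^\<^sub>m Suc k = (c ^ k \<cdot>\<^sub>m (if even k then 1\<^sub>m N else G)) * (c \<cdot>\<^sub>m G)"
    using Suc by simp
  also have "\<dots> = c ^ k \<cdot>\<^sub>m (c \<cdot>\<^sub>m ((if even k then 1\<^sub>m N else G) * G))"
    using G by (cases "even k") (simp_all add: mult_smult_assoc_mat[of _ N N] mult_smult_distrib[of _ N N] smult_smult_comm[of c])
  also have "(if even k then 1\<^sub>m N else G) * G = (if even (Suc k) then 1\<^sub>m N else G)"
    using G GG by auto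
  also have "c ^ k \<cdot>\<^sub>m (c \<cdot>\<^sub>m (if even (Suc k) then 1\<^sub>m N else G)) = c ^ Suc k \<cdot>\<^sub>m (if even (Suc k) then 1\<^sub>m N else G)"
    using G by (intro eq_matI) auto
  finally show ?case .
qed

lemma exp_sums': "(\<lambda>n. z ^ n / of_nat (fact n)) sums exp (z::complex)"
proof -
  have "(\<lambda>n. z ^ n /\<^sub>R fact n) = (\<lambda>n. z ^ n / of_nat (fact n))"
    by (auto simp: fun_eq_iff scaleR_conv_of_real divide_inverse mult.commute)
  then show ?thesis using exp_converges[of z] by simp
qed

lemma even_odd_sums:
  fixes c x y :: complex
  shows "(\<lambda>k. c ^ k / of_nat (fact k) * (if even k then x else y)) sums
         ((x + y) / 2 * exp c + (x - y) / 2 * exp (- c))"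
proof -
  have "(\<lambda>k. (x + y) / 2 * (c ^ k / of_nat (fact k)) + (x - y) / 2 * ((- c) ^ k / of_nat (fact k))) sums
         ((x + y) / 2 * exp c + (x - y) / 2 * exp (- c))"
    by (intro sums_add sums_mult exp_sums')
  moreover have "(\<lambda>k. (x + y) / 2 * (c ^ k / of_nat (fact k)) + (x - y) / 2 * ((- c) ^ k / of_nat (fact k)))
      = (\<lambda>k. c ^ k / of_nat (fact k) * (if even k then x else y))"
  proof
    fix k
    show "(x + y) / 2 * (c ^ k / of_nat (fact k)) + (x - y) / 2 * ((- c) ^ k / of_nat (fact k))
        = c ^ k / of_nat (fact k) * (if even k then x else y)"
    proof -
      have h1: "(x + y) / 2 + (x - y) / 2 = x" and h2: "(x + y) / 2 - (x - y) / 2 = y"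
        by (simp_all add: field_simps)
      define A where "A = c ^ k / of_nat (fact k)"
      have B: "(- c) ^ k / of_nat (fact k) = (if even k then A else - A)"
        unfolding A_def by (simp add: power_minus_even power_minus_odd)
      show ?thesis unfolding A_def[symmetric] B
        by (cases "even k") (simp_all add: field_simps)
    qed
  qed
  ultimately show ?thesis by simp
qed

definition e1 :: "real \<Rightarrow> complex" where "e1 t = exp (- (\<i> * complex_of_real (t / 2)))"
definition e2 :: "real \<Rightarrow> complex" where "e2 t = exp (\<i> * complex_of_real (t / 2))"

definition Pm :: "nat \<Rightarrow> complex mat \<Rightarrow> complex mat" where "Pm N G = (1/2) \<cdot>\<^sub>m (1\<^sub>m N + G)"
definition Qm :: "nat \<Rightarrow> complex mat \<Rightarrow> complex mat" where "Qm N G = (1/2) \<cdot>\<^sub>m (1\<^sub>m N - G)"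

lemma rot_formula:
  assumes G: "G \<in> carrier_mat N N" and GG: "G * G = 1\<^sub>m N"
  shows "rot G t = e1 t \<cdot>\<^sub>m Pm N G + e2 t \<cdot>\<^sub>m Qm N G"
proof (rule eq_matI)
  fix i j assume ij: "i < dim_row (e1 t \<cdot>\<^sub>m Pm N G + e2 t \<cdot>\<^sub>m Qm N G)" "j < dim_col (e1 t \<cdot>\<^sub>m Pm N G + e2 t \<cdot>\<^sub>m Qm N G)"
  then have i: "i < N" and j: "j < N" using G by (auto simp: Pm_def Qm_def)
  let ?c = "- \<i> * complex_of_real (t / 2)"
  let ?x = "if i = j then 1 else 0 :: complex"
  let ?y = "G $$ (i, j)"
  have "(rot G t) $$ (i, j) = (\<Sum>k. ((?c \<cdot>\<^sub>m G) ^\<^sub>m k) $$ (i, j) / of_nat (fact k))"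
    unfolding rot_def mat_exp_def using i j G by simp
  also have "(\<lambda>k. ((?c \<cdot>\<^sub>m G) ^\<^sub>m k) $$ (i, j) / of_nat (fact k)) =
             (\<lambda>k. ?c ^ k / of_nat (fact k) * (if even k then ?x else ?y))"
    unfolding pow_smult_invol[OF G GG] using i j G by (auto simp: fun_eq_iff)
  also have "(\<Sum>k. ?c ^ k / of_nat (fact k) * (if even k then ?x else ?y)) =
             (?x + ?y) / 2 * exp ?c + (?x - ?y) / 2 * exp (- ?c)"
    by (rule sums_unique[symmetric, OF even_odd_sums])
  also have "\<dots> = (e1 t \<cdot>\<^sub>m Pm N G + e2 t \<cdot>\<^sub>m Qm N G) $$ (i, j)"
    using i j G by (simp add: Pm_def Qm_def e1_def e2_def) (auto simp: field_simps)
  finally show "(rot G t) $$ (i, j) = (e1 t \<cdot>\<^sub>m Pm N G + e2 t \<cdot>\<^sub>m Qm N G) $$ (i, j)" .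
qed (use G in \<open>auto simp: rot_def mat_exp_def Pm_def Qm_def\<close>)





lemma e1_cis: "e1 t = cis (- (t / 2))" unfolding e1_def cis_conv_exp by simp
lemma e2_cis: "e2 t = cis (t / 2)" unfolding e2_def cis_conv_exp by simp
lemma cnj_cis: "cnj (cis a) = cis (- a)" by (simp add: complex_eq_iff)

lemma lin2:
  fixes A :: "complex mat"
  assumes A: "A \<in> carrier_mat N N" and u: "u \<in> carrier_vec N" and w: "w \<in> carrier_vec N"
  shows "A *\<^sub>v (a \<cdot>\<^sub>v u + b \<cdot>\<^sub>v w) = a \<cdot>\<^sub>v (A *\<^sub>v u) + b \<cdot>\<^sub>v (A *\<^sub>v w)"
  using A u w by (simp add: mult_add_distrib_mat_vec[OF A] mult_mat_vec[OF A])

lemma rot_carrier: "G \<in> carrier_mat N N \<Longrightarrow> rot G t \<in> carrier_mat N N"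
  unfolding rot_def mat_exp_def carrier_mat_def by simp

lemma state_cong:
  "(\<forall>i\<in>{1..k}. \<theta> i = \<theta>' i) \<Longrightarrow> circuit_state n C G k \<theta> = circuit_state n C G k \<theta>'"
  by (induction k) auto

lemma qfun_cong:
  "(\<forall>i\<in>{1..m}. \<theta> i = \<theta>' i) \<Longrightarrow> qfun n m C G M \<theta> = qfun n m C G M \<theta>'"
  unfolding qfun_def using state_cong[of m \<theta> \<theta>' n C G] by simp

lemma state_carrier:
  assumes CC: "\<forall>j\<in>{1..m+1}. C j \<in> carrier_mat (2^n) (2^n)"
    and GG: "\<forall>j\<in>{1..m}. G j \<in> carrier_mat (2^n) (2^n)"
  shows "k \<le> m \<Longrightarrow> circuit_state n C G k \<theta> \<in> carrier_vec (2^n)"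
proof (induction k)
  case 0
  have "C 1 \<in> carrier_mat (2^n) (2^n)" using CC by auto
  then show ?case by (simp add: ket0_def)
next
  case (Suc k)
  have "C (k+2) \<in> carrier_mat (2^n) (2^n)" using CC Suc by auto
  moreover have "rot (G (k+1)) (\<theta> (k+1)) \<in> carrier_mat (2^n) (2^n)" using GG Suc by (intro rot_carrier) auto
  ultimately show ?case using Suc by simp
qed

lemma state_form:
  assumes CC: "\<forall>j\<in>{1..m+1}. C j \<in> carrier_mat (2^n) (2^n)"
    and GG: "\<forall>j\<in>{1..m}. G j \<in> carrier_mat (2^n) (2^n) \<and> G j * G j = 1\<^sub>m (2^n)"
    and j: "j \<in> {1..m}"
  shows "j \<le> k \<Longrightarrow> k \<le> m \<Longrightarrow> \<exists>u w. u \<in> carrier_vec (2^n) \<and> w \<in> carrier_vec (2^n) \<and>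
           (\<forall>t. circuit_state n C G k (\<theta>(j:=t)) = e1 t \<cdot>\<^sub>v u + e2 t \<cdot>\<^sub>v w)"
proof (induction k)
  case 0 then show ?case using j by simp
next
  case (Suc k)
  let ?N = "2^n :: nat"
  have Ck: "C (k+2) \<in> carrier_mat ?N ?N" using CC Suc by auto
  have GG': "\<forall>j\<in>{1..m}. G j \<in> carrier_mat (2^n) (2^n)" using GG by auto
  show ?case
  proof (cases "j = Suc k")
    case True
    define s where "s = circuit_state n C G k \<theta>"
    have s: "s \<in> carrier_vec ?N" unfolding s_def using state_carrier[OF CC GG'] Suc by auto
    have sk: "circuit_state n C G k (\<theta>(j:=t)) = s" for t
      unfolding s_def using True by (intro state_cong) auto
    have Gj: "G j \<in> carrier_mat ?N ?N" "G j * G j = 1\<^sub>m ?N" using GG j by auto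
    have P: "Pm ?N (G j) \<in> carrier_mat ?N ?N" "Qm ?N (G j) \<in> carrier_mat ?N ?N"
      using Gj unfolding Pm_def Qm_def by auto
    define u where "u = C (k+2) *\<^sub>v (Pm ?N (G j) *\<^sub>v s)"
    define w where "w = C (k+2) *\<^sub>v (Qm ?N (G j) *\<^sub>v s)"
    have "circuit_state n C G (Suc k) (\<theta>(j:=t)) = e1 t \<cdot>\<^sub>v u + e2 t \<cdot>\<^sub>v w" for t
    proof -
      have "circuit_state n C G (Suc k) (\<theta>(j:=t)) = C (k+2) *\<^sub>v (rot (G j) t *\<^sub>v s)"
        using True sk by simp
      also have "rot (G j) t *\<^sub>v s = e1 t \<cdot>\<^sub>v (Pm ?N (G j) *\<^sub>v s) + e2 t \<cdot>\<^sub>v (Qm ?N (G j) *\<^sub>v s)"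
        unfolding rot_formula[OF Gj]
        using P s by (simp add: add_mult_distrib_mat_vec[of _ ?N ?N] smult_mat_vec[of _ ?N ?N])
      also have "C (k+2) *\<^sub>v \<dots> = e1 t \<cdot>\<^sub>v u + e2 t \<cdot>\<^sub>v w"
        unfolding u_def w_def using P s by (intro lin2[OF Ck]) auto
      finally show ?thesis .
    qed
    moreover have "u \<in> carrier_vec ?N" "w \<in> carrier_vec ?N" unfolding u_def w_def using Ck P s by auto
    ultimately show ?thesis by blast
  next
    case False
    then have jk: "j \<le> k" using Suc by simp
    then obtain u w where uw: "u \<in> carrier_vec ?N" "w \<in> carrier_vec ?N"
      "\<forall>t. circuit_state n C G k (\<theta>(j:=t)) = e1 t \<cdot>\<^sub>v u + e2 t \<cdot>\<^sub>v w"
      using Suc.IH[OF jk] Suc.prems(2) by (metis Suc_leD)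
    define R where "R = rot (G (k+1)) (\<theta> (k+1))"
    have R: "R \<in> carrier_mat ?N ?N" unfolding R_def using GG Suc by (intro rot_carrier) auto
    have "circuit_state n C G (Suc k) (\<theta>(j:=t)) = e1 t \<cdot>\<^sub>v (C (k+2) *\<^sub>v (R *\<^sub>v u)) + e2 t \<cdot>\<^sub>v (C (k+2) *\<^sub>v (R *\<^sub>v w))" for t
    proof -
      have "circuit_state n C G (Suc k) (\<theta>(j:=t)) = C (k+2) *\<^sub>v (R *\<^sub>v (e1 t \<cdot>\<^sub>v u + e2 t \<cdot>\<^sub>v w))"
        using False uw(3) unfolding R_def by simp
      also have "R *\<^sub>v (e1 t \<cdot>\<^sub>v u + e2 t \<cdot>\<^sub>v w) = e1 t \<cdot>\<^sub>v (R *\<^sub>v u) + e2 t \<cdot>\<^sub>v (R *\<^sub>v w)"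
        by (rule lin2[OF R uw(1,2)])
      also have "C (k+2) *\<^sub>v \<dots> = e1 t \<cdot>\<^sub>v (C (k+2) *\<^sub>v (R *\<^sub>v u)) + e2 t \<cdot>\<^sub>v (C (k+2) *\<^sub>v (R *\<^sub>v w))"
        using R uw by (intro lin2[OF Ck]) auto
      finally show ?thesis .
    qed
    moreover have "C (k+2) *\<^sub>v (R *\<^sub>v u) \<in> carrier_vec ?N" "C (k+2) *\<^sub>v (R *\<^sub>v w) \<in> carrier_vec ?N"
      using Ck R uw by auto
    ultimately show ?thesis by blast
  qed
qed

lemma qform:
  fixes M :: "complex mat"
  assumes M: "M \<in> carrier_mat N N" and u: "u \<in> carrier_vec N" and w: "w \<in> carrier_vec N"
  shows "\<exists>a b d. \<forall>t. Re (\<Sum>i<N. cnj ((e1 t \<cdot>\<^sub>v u + e2 t \<cdot>\<^sub>v w) $ i) * ((M *\<^sub>v (e1 t \<cdot>\<^sub>v u + e2 t \<cdot>\<^sub>v w)) $ i))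
            = a + b * cos t + d * sin t"
proof -
  define X where "X = (\<Sum>i<N. cnj (u $ i) * (M *\<^sub>v u) $ i + cnj (w $ i) * (M *\<^sub>v w) $ i)"
  define Y where "Y = (\<Sum>i<N. cnj (u $ i) * (M *\<^sub>v w) $ i)"
  define Z where "Z = (\<Sum>i<N. cnj (w $ i) * (M *\<^sub>v u) $ i)"
  have key: "(\<Sum>i<N. cnj ((e1 t \<cdot>\<^sub>v u + e2 t \<cdot>\<^sub>v w) $ i) * ((M *\<^sub>v (e1 t \<cdot>\<^sub>v u + e2 t \<cdot>\<^sub>v w)) $ i))
        = X + cis t * Y + cis (- t) * Z" for t
  proof -
    have Mv: "M *\<^sub>v (e1 t \<cdot>\<^sub>v u + e2 t \<cdot>\<^sub>v w) = e1 t \<cdot>\<^sub>v (M *\<^sub>v u) + e2 t \<cdot>\<^sub>v (M *\<^sub>v w)"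
      by (rule lin2[OF M u w])
    have c1: "cnj (e1 t) = e2 t" "cnj (e2 t) = e1 t" unfolding e1_cis e2_cis cnj_cis by simp_all
    have c2: "e2 t * e1 t = 1" "e1 t * e2 t = 1" "e2 t * e2 t = cis t" "e1 t * e1 t = cis (- t)"
      unfolding e1_cis e2_cis cis_mult by simp_all
    have "(\<Sum>i<N. cnj ((e1 t \<cdot>\<^sub>v u + e2 t \<cdot>\<^sub>v w) $ i) * ((M *\<^sub>v (e1 t \<cdot>\<^sub>v u + e2 t \<cdot>\<^sub>v w)) $ i))
      = (\<Sum>i<N. (cnj (u $ i) * (M *\<^sub>v u) $ i + cnj (w $ i) * (M *\<^sub>v w) $ i)
              + cis t * (cnj (u $ i) * (M *\<^sub>v w) $ i) + cis (- t) * (cnj (w $ i) * (M *\<^sub>v u) $ i))"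
    proof (rule sum.cong[OF refl])
      fix i assume i: "i \<in> {..<N}"
      then have iN: "i < N" by simp
      have "cnj ((e1 t \<cdot>\<^sub>v u + e2 t \<cdot>\<^sub>v w) $ i) * ((M *\<^sub>v (e1 t \<cdot>\<^sub>v u + e2 t \<cdot>\<^sub>v w)) $ i)
          = (e2 t * cnj (u $ i) + e1 t * cnj (w $ i)) * (e1 t * (M *\<^sub>v u) $ i + e2 t * (M *\<^sub>v w) $ i)"
        unfolding Mv using iN u w M by (simp add: c1)
      also have "\<dots> = (e2 t * e1 t) * (cnj (u $ i) * (M *\<^sub>v u) $ i) + (e1 t * e2 t) * (cnj (w $ i) * (M *\<^sub>v w) $ i)
              + (e2 t * e2 t) * (cnj (u $ i) * (M *\<^sub>v w) $ i) + (e1 t * e1 t) * (cnj (w $ i) * (M *\<^sub>v u) $ i)"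
        by (simp add: algebra_simps)
      also have "\<dots> = (cnj (u $ i) * (M *\<^sub>v u) $ i + cnj (w $ i) * (M *\<^sub>v w) $ i)
              + cis t * (cnj (u $ i) * (M *\<^sub>v w) $ i) + cis (- t) * (cnj (w $ i) * (M *\<^sub>v u) $ i)"
        unfolding c2 by simp
      finally show "cnj ((e1 t \<cdot>\<^sub>v u + e2 t \<cdot>\<^sub>v w) $ i) * ((M *\<^sub>v (e1 t \<cdot>\<^sub>v u + e2 t \<cdot>\<^sub>v w)) $ i)
          = (cnj (u $ i) * (M *\<^sub>v u) $ i + cnj (w $ i) * (M *\<^sub>v w) $ i)
              + cis t * (cnj (u $ i) * (M *\<^sub>v w) $ i) + cis (- t) * (cnj (w $ i) * (M *\<^sub>v u) $ i)" .
    qed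
    also have "\<dots> = X + cis t * Y + cis (- t) * Z"
      unfolding X_def Y_def Z_def by (simp add: sum.distrib sum_distrib_left)
    finally show ?thesis .
  qed
  show ?thesis
  proof (intro exI allI)
    fix t
    show "Re (\<Sum>i<N. cnj ((e1 t \<cdot>\<^sub>v u + e2 t \<cdot>\<^sub>v w) $ i) * ((M *\<^sub>v (e1 t \<cdot>\<^sub>v u + e2 t \<cdot>\<^sub>v w)) $ i))
       = Re X + (Re Y + Re Z) * cos t + (Im Z - Im Y) * sin t"
      unfolding key by (simp add: algebra_simps)
  qed
qed

lemma qfun_trig:
  assumes CC: "\<forall>j\<in>{1..m+1}. C j \<in> carrier_mat (2^n) (2^n)"
    and GG: "\<forall>j\<in>{1..m}. G j \<in> carrier_mat (2^n) (2^n) \<and> G j * G j = 1\<^sub>m (2^n)"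
    and M: "M \<in> carrier_mat (2^n) (2^n)"
  shows "\<forall>j\<in>{1..m}. \<forall>w. \<exists>a b d. \<forall>t. qfun n m C G M (w(j:=t)) = a + b * cos t + d * sin t"
proof (intro ballI allI)
  fix j w assume j: "j \<in> {1..m}"
  obtain u v where uv: "u \<in> carrier_vec (2^n)" "v \<in> carrier_vec (2^n)"
    "\<forall>t. circuit_state n C G m (w(j:=t)) = e1 t \<cdot>\<^sub>v u + e2 t \<cdot>\<^sub>v v"
    using state_form[OF CC GG j, of m w] j by auto
  obtain a b d where abd: "\<forall>t. Re (\<Sum>i<2^n. cnj ((e1 t \<cdot>\<^sub>v u + e2 t \<cdot>\<^sub>v v) $ i) * ((M *\<^sub>v (e1 t \<cdot>\<^sub>v u + e2 t \<cdot>\<^sub>v v)) $ i))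
            = a + b * cos t + d * sin t"
    using qform[OF M uv(1,2)] by blast
  show "\<exists>a b d. \<forall>t. qfun n m C G M (w(j:=t)) = a + b * cos t + d * sin t"
    by (rule exI[of _ a], rule exI[of _ b], rule exI[of _ d], simp only: qfun_def Let_def uv(3) abd) simp
qed


lemma poly_root_list:
  assumes "(k, a) \<in> set xs" "0 < k"
  shows "poly (\<Prod>(n, b)\<leftarrow>xs. [:- b, 1:] ^ n) (a::complex) = 0"
  using assms(1)
proof (induction xs)
  case Nil then show ?case by simp
next
  case (Cons y xs)
  obtain k' b where y: "y = (k', b)" by force
  have e: "poly (\<Prod>(n, b)\<leftarrow>y # xs. [:- b, 1:] ^ n) a = poly [:- b, 1:] a ^ k' * poly (\<Prod>(n, b)\<leftarrow>xs. [:- b, 1:] ^ n) a"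
    unfolding y by (simp add: poly_power)
  show ?case
  proof (cases "y = (k, a)")
    case True
    then have "poly [:- b, 1:] a ^ k' = 0" using y assms(2) by simp
    then show ?thesis unfolding e by simp
  next
    case False
    then have "(k, a) \<in> set xs" using Cons.prems by simp
    then show ?thesis unfolding e using Cons.IH by simp
  qed
qed


lemma sum_list_eq_le:
  fixes f g :: "nat \<Rightarrow> nat"
  assumes "\<forall>x\<in>set L. f x \<le> g x" "sum_list (map f L) = sum_list (map g L)"
  shows "\<forall>x\<in>set L. f x = g x"
  using assms
proof (induction L)
  case Nil then show ?case by simp
next
  case (Cons y L)
  have "sum_list (map f L) \<le> sum_list (map g L)" using Cons.prems(1) by (intro sum_list_mono) auto
  moreover have "f y \<le> g y" using Cons.prems(1) by simp
  moreover have "f y + sum_list (map f L) = g y + sum_list (map g L)" using Cons.prems(2) by simp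
  ultimately have fy: "f y = g y" and s: "sum_list (map f L) = sum_list (map g L)" by linarith+
  have "\<forall>x\<in>set L. f x \<le> g x" using Cons.prems(1) by simp
  then have "\<forall>x\<in>set L. f x = g x" using Cons.IH s by blast
  then show ?case using fy by simp
qed




lemma mv_index: "A \<in> carrier_mat N N \<Longrightarrow> v \<in> carrier_vec N \<Longrightarrow> i < N \<Longrightarrow>
   (A *\<^sub>v v) $ i = (\<Sum>l<N. A $$ (i, l) * v $ l)"
proof -
  assume A: "A \<in> carrier_mat N N" and v: "v \<in> carrier_vec N" and i: "i < N"
  have "(A *\<^sub>v v) $ i = Matrix.row A i \<bullet> v" using A i by simp
  also have "\<dots> = (\<Sum>l\<in>{0..<N}. Matrix.row A i $ l * v $ l)" using v unfolding scalar_prod_def by simp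
  also have "\<dots> = (\<Sum>l<N. A $$ (i, l) * v $ l)" unfolding lessThan_atLeast0 using A i
    by (intro sum.cong) auto
  finally show ?thesis .
qed

lemma norm_sum_zero:
  fixes x :: "complex Matrix.vec"
  assumes "(\<Sum>i<N. cnj (x $ i) * x $ i) = 0"
  shows "\<forall>i<N. x $ i = 0"
proof -
  have e: "cnj (x $ i) * x $ i = complex_of_real ((norm (x $ i))\<^sup>2)" for i
    using complex_norm_square[of "x $ i"] by (simp add: mult.commute)
  have "complex_of_real (\<Sum>i<N. (norm (x $ i))\<^sup>2) = 0" using assms unfolding e of_real_sum .
  then have "(\<Sum>i<N. (norm (x $ i))\<^sup>2) = 0" by (simp only: of_real_eq_0_iff)
  then have "\<forall>i\<in>{..<N}. (norm (x $ i))\<^sup>2 = 0" by (subst sum_nonneg_eq_0_iff[symmetric]) auto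
  then show ?thesis by simp
qed

lemma herm_kernel:
  fixes H :: "complex mat"
  assumes H: "H \<in> carrier_mat N N" and adjH: "\<And>i j. i < N \<Longrightarrow> j < N \<Longrightarrow> H $$ (i, j) = cnj (H $$ (j, i))"
    and v: "v \<in> carrier_vec N" and HH: "H *\<^sub>v (H *\<^sub>v v) = 0\<^sub>v N"
  shows "H *\<^sub>v v = 0\<^sub>v N"
proof -
  define x where "x = H *\<^sub>v v"
  have x: "x \<in> carrier_vec N" unfolding x_def using H v by auto
  have xi: "x $ i = (\<Sum>l<N. H $$ (i, l) * v $ l)" if "i < N" for i
    unfolding x_def by (rule mv_index[OF H v that])
  have Hx: "(\<Sum>i<N. H $$ (l, i) * x $ i) = 0" if "l < N" for l
  proof -
    have "(H *\<^sub>v x) $ l = 0" using HH that unfolding x_def by simp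
    then show ?thesis using mv_index[OF H x that] by simp
  qed
  have "(\<Sum>i<N. cnj (x $ i) * x $ i) = (\<Sum>i<N. \<Sum>l<N. cnj (x $ i) * (H $$ (i, l) * v $ l))"
  proof (rule sum.cong[OF refl])
    fix i assume "i \<in> {..<N}"
    then have e: "x $ i = (\<Sum>l<N. H $$ (i, l) * v $ l)" using xi by simp
    have "cnj (x $ i) * x $ i = cnj (x $ i) * (\<Sum>l<N. H $$ (i, l) * v $ l)"
      by (rule arg_cong[OF e])
    also have "\<dots> = (\<Sum>l<N. cnj (x $ i) * (H $$ (i, l) * v $ l))" by (rule sum_distrib_left)
    finally show "cnj (x $ i) * x $ i = (\<Sum>l<N. cnj (x $ i) * (H $$ (i, l) * v $ l))" .
  qed
  also have "\<dots> = (\<Sum>l<N. \<Sum>i<N. cnj (x $ i) * (H $$ (i, l) * v $ l))" by (rule sum.swap)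
  also have "\<dots> = (\<Sum>l<N. v $ l * cnj (\<Sum>i<N. H $$ (l, i) * x $ i))"
  proof (rule sum.cong[OF refl])
    fix l assume l: "l \<in> {..<N}"
    have "(\<Sum>i<N. cnj (x $ i) * (H $$ (i, l) * v $ l)) = (\<Sum>i<N. v $ l * cnj (H $$ (l, i) * x $ i))"
    proof (rule sum.cong[OF refl])
      fix i assume i: "i \<in> {..<N}"
      have "H $$ (i, l) = cnj (H $$ (l, i))" using i l by (intro adjH) auto
      then show "cnj (x $ i) * (H $$ (i, l) * v $ l) = v $ l * cnj (H $$ (l, i) * x $ i)" by simp
    qed
    also have "\<dots> = v $ l * cnj (\<Sum>i<N. H $$ (l, i) * x $ i)"
      by (simp only: sum_distrib_left cnj_sum)
    finally show "(\<Sum>i<N. cnj (x $ i) * (H $$ (i, l) * v $ l)) = v $ l * cnj (\<Sum>i<N. H $$ (l, i) * x $ i)" .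
  qed
  also have "\<dots> = 0" using Hx by (intro sum.neutral) simp
  finally have S0: "(\<Sum>i<N. cnj (x $ i) * x $ i) = 0" .
  have "\<forall>i<N. x $ i = 0" by (rule norm_sum_zero[OF S0])
  then show ?thesis unfolding x_def[symmetric] using x by (intro eq_vecI) auto
qed




lemma herm_sq:
  fixes G :: "complex mat"
  assumes G: "G \<in> carrier_mat N N"
    and adjG: "\<And>i j. i < N \<Longrightarrow> j < N \<Longrightarrow> G $$ (i, j) = cnj (G $$ (j, i))"
    and spec: "{k. eigenvalue G k} = {-1, 1}"
  shows "G * G = 1\<^sub>m N"
proof -
  obtain as where "char_poly G = (\<Prod>a\<leftarrow>as. [:- a, 1:])" using char_poly_factorized[OF G] by auto
  then obtain n_as where jnf: "jordan_nf G n_as" using jordan_nf_exists[OF G] by auto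
  have cp: "char_poly G = (\<Prod>(n, a)\<leftarrow>n_as. [:- a, 1:] ^ n)" by (rule jordan_nf_char_poly[OF jnf])
  have pos: "0 < k" if "(k, a) \<in> set n_as" for k a
    using jnf that unfolding jordan_nf_def by (metis fst_conv gr0I image_eqI)
  have ev: "a = -1 \<or> a = 1" if "(k, a) \<in> set n_as" for k a
  proof -
    have "poly (char_poly G) a = 0" unfolding cp by (rule poly_root_list[OF that pos[OF that]])
    then have "eigenvalue G a" using eigenvalue_root_char_poly[OF G] by simp
    then show ?thesis using spec by auto
  qed
  have one: "k = 1" if ka: "(k, a) \<in> set n_as" for k a
  proof -
    let ?H = "char_matrix G a"
    have H: "?H \<in> carrier_mat N N" using G by simp
    have ar: "cnj a = a" using ev[OF ka] by auto
    have adjH: "?H $$ (i, j) = cnj (?H $$ (j, i))" if "i < N" "j < N" for i j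
    proof -
      have g: "G $$ (i, j) = cnj (G $$ (j, i))" by (rule adjG[OF that])
      show ?thesis using that G ar by (simp add: char_matrix_def g[symmetric])
    qed
    have ker: "mat_kernel (?H ^\<^sub>m 2) = mat_kernel (?H ^\<^sub>m 1)"
    proof -
      have p2: "?H ^\<^sub>m 2 = ?H * ?H" and p1: "?H ^\<^sub>m 1 = ?H"
        using H by (simp_all add: numeral_2_eq_2)
      show ?thesis unfolding p2 p1 mat_kernel_def
      proof (intro Collect_cong iffI conjI)
        fix v assume "v \<in> carrier_vec (dim_col (?H * ?H)) \<and> ?H * ?H *\<^sub>v v = 0\<^sub>v (dim_row (?H * ?H))"
        then have v: "v \<in> carrier_vec N" and hv: "?H *\<^sub>v (?H *\<^sub>v v) = 0\<^sub>v N" using H by auto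
        show "v \<in> carrier_vec (dim_col ?H)" using v H by simp
        show "?H *\<^sub>v v = 0\<^sub>v (dim_row ?H)" using herm_kernel[OF H adjH v hv] H by simp
      next
        fix v assume "v \<in> carrier_vec (dim_col ?H) \<and> ?H *\<^sub>v v = 0\<^sub>v (dim_row ?H)"
        then have v: "v \<in> carrier_vec N" and hv: "?H *\<^sub>v v = 0\<^sub>v N" using H by auto
        show "v \<in> carrier_vec (dim_col (?H * ?H))" using v H by simp
        have z: "?H *\<^sub>v 0\<^sub>v N = 0\<^sub>v N"
        proof (rule eq_vecI)
          fix i assume "i < dim_vec (0\<^sub>v N :: complex Matrix.vec)"
          then have i: "i < N" by simp
          have "Matrix.row ?H i \<in> carrier_vec N" using H by auto
          then show "(?H *\<^sub>v 0\<^sub>v N) $ i = 0\<^sub>v N $ i" using i H by simp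
        qed (use H in simp)
        show "?H * ?H *\<^sub>v v = 0\<^sub>v (dim_row (?H * ?H))" using v H hv z by simp
      qed
    qed
    have "dim_gen_eigenspace G a 2 = dim_gen_eigenspace G a 1"
      unfolding dim_gen_eigenspace_def kernel_dim_def using ker H by simp
    then have eq: "(\<Sum>n\<leftarrow>map fst [(n, e)\<leftarrow>n_as . e = a]. min 2 n) = (\<Sum>n\<leftarrow>map fst [(n, e)\<leftarrow>n_as . e = a]. min 1 n)"
      unfolding dim_gen_eigenspace[OF jnf] .
    have kin: "k \<in> set (map fst [(n, e)\<leftarrow>n_as . e = a])" using ka by force
    have "\<forall>x\<in>set (map fst [(n, e)\<leftarrow>n_as . e = a]). min 1 x = min 2 x"
      by (rule sum_list_eq_le) (use eq in \<open>auto simp: min_def\<close>)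
    then have "min 1 k = min (2::nat) k" using kin by blast
    then show "k = 1" using pos[OF ka] by linarith
  qed
  obtain P Q where PQ: "P \<in> carrier_mat N N" "Q \<in> carrier_mat N N"
    "\<And>k. G ^\<^sub>m k = P * (jordan_matrix n_as) ^\<^sub>m k * Q"
    using jordan_nf_powE[OF G jnf] by blast
  have blk: "(\<lambda>(n, a). jordan_block n a ^\<^sub>m 2) x = (\<lambda>(n, a). jordan_block n a ^\<^sub>m 0) x"
    if x: "x \<in> set n_as" for x
  proof -
    obtain k a where x': "x = (k, a)" by force
    have k1: "k = 1" using one x x' by auto
    have a2: "a * a = 1" using ev[of k a] x x' by auto
    show ?thesis unfolding x' k1 using a2
      by (intro eq_matI) (auto simp: numeral_2_eq_2 scalar_prod_def)
  qed
  have "jordan_matrix n_as ^\<^sub>m 2 = jordan_matrix n_as ^\<^sub>m 0"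
    unfolding jordan_matrix_pow using blk by (metis (no_types, lifting) map_eq_conv)
  then have "G ^\<^sub>m 2 = G ^\<^sub>m 0" using PQ(3) by metis
  then show ?thesis using G by (simp add: numeral_2_eq_2)
qed




theorem theorem3:
  fixes n m L :: nat
    and C G :: "nat \<Rightarrow> complex mat"
    and M :: "complex mat"
    and p :: "nat \<Rightarrow> real"
  assumes C: "\<And>j. j \<in> {1..m+1} \<Longrightarrow> unitary_mat (2 ^ n) (C j)"
    and G: "\<And>j. j \<in> {1..m} \<Longrightarrow> hermitian_mat (2 ^ n) (G j)"
    and Gspec: "\<And>j. j \<in> {1..m} \<Longrightarrow> {k. eigenvalue (G j) k} = {-1, 1}"
    and M: "hermitian_mat (2 ^ n) M"
    and L: "0 < L" "L \<le> m"
  shows "card (qgrid m L) = (\<Sum>k\<le>L. 2 ^ k * (m choose k)) \<and>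
         (\<forall>v. card {j\<in>{1..m}. v j \<noteq> 0} \<le> L \<longrightarrow>
            ftilde (qfun n m C G M) m L p (\<lambda>j. p j + v j) = qfun n m C G M (\<lambda>j. p j + v j)) \<and>
         (\<forall>\<alpha>. (\<Sum>j\<in>{1..m}. \<alpha> j) \<le> L \<longrightarrow>
            Dmulti m \<alpha> (\<lambda>\<theta>. qfun n m C G M \<theta> - ftilde (qfun n m C G M) m L p \<theta>) p = 0)"
proof -
  let ?N = "2 ^ n :: nat"
  let ?f = "qfun n m C G M"
  have CC: "\<forall>j\<in>{1..m+1}. C j \<in> carrier_mat ?N ?N" using C unfolding unitary_mat_def by blast
  have GG: "\<forall>j\<in>{1..m}. G j \<in> carrier_mat ?N ?N \<and> G j * G j = 1\<^sub>m ?N"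
  proof
    fix j assume j: "j \<in> {1..m}"
    have Gc: "G j \<in> carrier_mat ?N ?N" and ad: "adj (G j) = G j" using G[OF j] unfolding hermitian_mat_def by auto
    have adjG: "G j $$ (a, b) = cnj (G j $$ (b, a))" if "a < ?N" "b < ?N" for a b
    proof -
      have "G j $$ (a, b) = adj (G j) $$ (a, b)" using ad by simp
      also have "\<dots> = cnj (G j $$ (b, a))" unfolding adj_def using that Gc by simp
      finally show ?thesis .
    qed
    show "G j \<in> carrier_mat ?N ?N \<and> G j * G j = 1\<^sub>m ?N"
      using Gc herm_sq[OF Gc adjG Gspec[OF j]] by blast
  qed
  have MM: "M \<in> carrier_mat ?N ?N" using M unfolding hermitian_mat_def by blast
  have T: "\<forall>j\<in>{1..m}. \<forall>w. \<exists>a b d. \<forall>t. ?f (w(j:=t)) = a + b * cos t + d * sin t"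
    by (rule qfun_trig[OF CC GG MM])
  have cong: "\<And>\<theta> \<theta>'. (\<forall>i\<in>{1..m}. \<theta> i = \<theta>' i) \<Longrightarrow> ?f \<theta> = ?f \<theta>'"
    by (rule qfun_cong)
  have P2: "\<forall>v. card {j\<in>{1..m}. v j \<noteq> 0} \<le> L \<longrightarrow>
            ftilde ?f m L p (\<lambda>j. p j + v j) = ?f (\<lambda>j. p j + v j)"
    using part2_abstract[OF T cong] by blast
  have P3: "\<forall>\<alpha>. (\<Sum>j\<in>{1..m}. \<alpha> j) \<le> L \<longrightarrow>
            Dmulti m \<alpha> (\<lambda>\<theta>. ?f \<theta> - ftilde ?f m L p \<theta>) p = 0"
  proof (intro allI impI)
    fix \<alpha> :: "nat \<Rightarrow> nat" assume a: "(\<Sum>j\<in>{1..m}. \<alpha> j) \<le> L"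
    define S where "S = {j\<in>{1..m}. 0 < \<alpha> j}"
    have fS: "finite S" unfolding S_def by simp
    have "card S = (\<Sum>j\<in>S. 1)" by simp
    also have "\<dots> \<le> (\<Sum>j\<in>S. \<alpha> j)" unfolding S_def by (intro sum_mono) auto
    also have "\<dots> \<le> (\<Sum>j\<in>{1..m}. \<alpha> j)" unfolding S_def by (intro sum_mono2) auto
    finally have cS: "card S \<le> L" using a by simp
    show "Dmulti m \<alpha> (\<lambda>\<theta>. ?f \<theta> - ftilde ?f m L p \<theta>) p = 0"
    proof (rule part3_abstract[where S = S])
      show "\<forall>j\<in>{1..m}. 0 < \<alpha> j \<longrightarrow> j \<in> S" unfolding S_def by auto
      show "\<forall>x. (\<forall>i. i \<notin> S \<longrightarrow> x i = p i) \<longrightarrow> ?f x - ftilde ?f m L p x = 0"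
      proof (intro allI impI)
        fix x assume x: "\<forall>i. i \<notin> S \<longrightarrow> x i = p i"
        define v where "v = (\<lambda>j. x j - p j)"
        have xv: "x = (\<lambda>j. p j + v j)" unfolding v_def by simp
        have "{j\<in>{1..m}. v j \<noteq> 0} \<subseteq> S" using x unfolding v_def by auto
        then have "card {j\<in>{1..m}. v j \<noteq> 0} \<le> card S" using fS by (rule card_mono[rotated])
        then have "card {j\<in>{1..m}. v j \<noteq> 0} \<le> L" using cS by simp
        then have "ftilde ?f m L p (\<lambda>j. p j + v j) = ?f (\<lambda>j. p j + v j)" using P2 by blast
        then show "?f x - ftilde ?f m L p x = 0" unfolding xv by simp
      qed
    qed
  qed
  show ?thesis using part1_count P2 P3 by blast
qed


end
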